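(* Let $\mathcal E=\mathbb R^{d_\eta}$, $\mathcal B=\mathbb R^{d_b}$, $\mathcal I=\mathbb R^{d_\mu}$ and let $\Pi\in\mathbb R^{d\times d}$, $d=d_\eta+d_b+d_\mu$, be a symmetric positive-definite matrix, written in block form with respect to the partition $x=(\eta,b,\mu)\in\mathcal E\times\mathcal B\times\mathcal I$ as $$\Pi=\begin{bmatrix}\Pi_{\eta}&\Pi_{\eta b}&\Pi_{\eta\mu}\\ \Pi_{b\eta}&\Pi_b&\Pi_{b\mu}\\ \Pi_{\mu\eta}&\Pi_{\mu b}&\Pi_\mu\end{bmatrix},$$ and assume the Markov blanket condition $\Pi_{\eta\mu}=\Pi_{\mu\eta}^\top=0$. Let $\Sigma:=\Pi^{-1}$ with corresponding blocks $\Sigma_{\eta b},\Sigma_b,\Sigma_{\mu b}$, and define the linear maps $\boldsymbol\eta:\mathcal B\to\mathcal E$, $\boldsymbol\eta(b)=\Sigma_{\eta b}\Sigma_b^{-1}b$ and $\boldsymbol\mu:\mathcal B\to\mathcal I$, $\boldsymbol\mu(b)=\Sigma_{\mu b}\Sigma_b^{-1}b$. Then the following are equivalent: (i) there exists a function $\sigma:\operatorname{Im}\boldsymbol\mu\to\operatorname{Im}\boldsymbol\eta$ such that $\sigma(\boldsymbol\mu(b))=\boldsymbol\eta(b)$ for every $b\in\mathcal B$; (ii) for all $b_1,b_2\in\mathcal B$, $\boldsymbol\mu(b_1)=\boldsymbol\mu(b_2)$ implies $\boldsymbol\eta(b_1)=\boldsymbol\eta(b_2)$; (iii) $\ker\Sigma_{\mu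 b}\subset\ker\Sigma_{\eta b}$; (iv) $\ker\Pi_{\mu b}\subset\ker\Pi_{\eta b}$.
   Context: Here $\Pi$ is the precision matrix of a Gaussian density $p(x)=\mathcal N(x;0,\Pi^{-1})$ on $\mathbb R^d$; the condition $\Pi_{\eta\mu}=0$ is equivalent to conditional independence of $\eta$ and $\mu$ given $b$, and $\boldsymbol\eta(b)=\mathbb E[\eta\mid b]$, $\boldsymbol\mu(b)=\mathbb E[\mu\mid b]$ are the conditional expectations under $p$. Blocks $\Sigma_{\eta b},\Sigma_{\mu b},\Sigma_b$ denote the corresponding submatrices of $\Sigma=\Pi^{-1}$ (not the inverses of blocks of $\Pi$); $\Sigma_b$ is invertible as a principal submatrix of a positive-definite matrix. $\ker$ and $\operatorname{Im}$ denote kernel and image. *)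

theory Defs
  imports "HOL-Analysis.Analysis"
begin

text \<open>Coordinates of R^d are indexed by the sum type 'e + ('b + 'm), i.e. x = (eta, b, mu)
  with eta in R^d_eta (index type 'e), b in R^d_b (index type 'b), mu in R^d_mu (index type 'm).\<close>

definition sym_pos_def_mat :: "real^'n^'n \<Rightarrow> bool" where
  "sym_pos_def_mat A \<longleftrightarrow> transpose A = A \<and> (\<forall>x. x \<noteq> 0 \<longrightarrow> x \<bullet> (A *v x) > 0)"

definition blk_eb :: "real^('e::finite + 'b::finite + 'm::finite)^('e + 'b + 'm) \<Rightarrow> real^'b^'e" where
  "blk_eb M = (\<chi> i j. M $ Inl i $ Inr (Inl j))"
definition blk_mb :: "real^('e::finite + 'b::finite + 'm::finite)^('e + 'b + 'm) \<Rightarrow> real^'b^'m" where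
  "blk_mb M = (\<chi> i j. M $ Inr (Inr i) $ Inr (Inl j))"
definition blk_bb :: "real^('e::finite + 'b::finite + 'm::finite)^('e + 'b + 'm) \<Rightarrow> real^'b^'b" where
  "blk_bb M = (\<chi> i j. M $ Inr (Inl i) $ Inr (Inl j))"
definition blk_em :: "real^('e::finite + 'b::finite + 'm::finite)^('e + 'b + 'm) \<Rightarrow> real^'m^'e" where
  "blk_em M = (\<chi> i j. M $ Inl i $ Inr (Inr j))"
definition blk_me :: "real^('e::finite + 'b::finite + 'm::finite)^('e + 'b + 'm) \<Rightarrow> real^'e^'m" where
  "blk_me M = (\<chi> i j. M $ Inr (Inr i) $ Inl j)"

definition eta_map :: "real^('e::finite + 'b::finite + 'm::finite)^('e + 'b + 'm) \<Rightarrow> real^'b \<Rightarrow> real^'e" where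
  "eta_map P b = (blk_eb (matrix_inv P) ** matrix_inv (blk_bb (matrix_inv P))) *v b"
definition mu_map :: "real^('e::finite + 'b::finite + 'm::finite)^('e + 'b + 'm) \<Rightarrow> real^'b \<Rightarrow> real^'m" where
  "mu_map P b = (blk_mb (matrix_inv P) ** matrix_inv (blk_bb (matrix_inv P))) *v b"

end

theory Submission imports Defs begin

lemma sum_UNIV_plus:
  fixes f :: "('a::finite + 'b::finite) \<Rightarrow> 'c::comm_monoid_add"
  shows "sum f UNIV = sum (\<lambda>i. f (Inl i)) UNIV + sum (\<lambda>i. f (Inr i)) UNIV"
  using sum.Plus[of "UNIV::'a set" "UNIV::'b set" f] by (simp add: comp_def)

lemma inj_mat_inv:
  fixes A :: "real^'n^'n"
  assumes "\<forall>x. A *v x = 0 \<longrightarrow> x = 0"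
  shows "A ** matrix_inv A = mat 1 \<and> matrix_inv A ** A = mat 1"
proof -
  obtain B where "B ** A = mat 1" using assms matrix_left_invertible_ker by blast
  hence "invertible A" using invertible_left_inverse by blast
  thus ?thesis unfolding invertible_def matrix_inv_def by (rule someI_ex)
qed

lemma principal_inj:
  fixes A :: "real^'n^'n" and emb :: "'k::finite \<Rightarrow> 'n"
  assumes pos: "\<forall>x. x \<noteq> 0 \<longrightarrow> x \<bullet> (A *v x) > 0" and inj: "inj emb"
    and eq: "(\<chi> i j. A$emb i$emb j) *v x = 0"
  shows "x = 0"
proof -
  define z :: "real^'n" where "z = (\<chi> k. if k \<in> range emb then x $ inv emb k else 0)"
  have zi: "z $ emb i = x $ i" for i using inj by (simp add: z_def)
  have gen: "(\<Sum>l\<in>UNIV. g l * z$l) = (\<Sum>j\<in>UNIV. g (emb j) * x$j)" for g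
  proof -
    have "(\<Sum>l\<in>UNIV. g l * z$l) = (\<Sum>l\<in>range emb. g l * z$l)"
      by (rule sum.mono_neutral_right) (auto simp: z_def)
    also have "\<dots> = (\<Sum>j\<in>UNIV. g (emb j) * z$(emb j))"
      using inj by (simp add: sum.reindex)
    finally show ?thesis by (simp add: zi)
  qed
  have Az: "(A *v z) $ emb i = ((\<chi> i j. A$emb i$emb j) *v x) $ i" for i
    by (simp add: matrix_vector_mult_def gen)
  have "z \<bullet> (A *v z) = (\<Sum>l\<in>UNIV. (A *v z)$l * z$l)"
    by (simp add: inner_vec_def mult.commute)
  also have "\<dots> = (\<Sum>j\<in>UNIV. (A *v z)$(emb j) * x$j)" by (rule gen)
  also have "\<dots> = 0" by (simp add: Az eq)
  finally have "z = 0" using pos by (metis less_irrefl)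
  thus ?thesis by (metis zi vec_eq_iff zero_index)
qed

lemma main:
  fixes P :: "real^('e::finite + 'b::finite + 'm::finite)^('e + 'b + 'm)"
  assumes spd: "sym_pos_def_mat P"
    and blanket_em: "blk_em P = 0"
    and blanket_me: "blk_me P = 0"
  shows "(\<forall>x. blk_mb (matrix_inv P) *v x = 0 \<longrightarrow> blk_eb (matrix_inv P) *v x = 0)
     \<longleftrightarrow> (\<forall>x. blk_mb P *v x = 0 \<longrightarrow> blk_eb P *v x = 0)"
    and "\<forall>x. blk_bb (matrix_inv P) *v x = 0 \<longrightarrow> x = 0"
proof -
  define S where "S = matrix_inv P"
  have posP: "\<forall>x. x \<noteq> 0 \<longrightarrow> x \<bullet> (P *v x) > 0" using spd sym_pos_def_mat_def by blast
  have "\<forall>x. P *v x = 0 \<longrightarrow> x = 0" using posP by (metis inner_zero_right less_irrefl)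
  from inj_mat_inv[OF this] have PS: "P ** S = mat 1" and SP: "S ** P = mat 1" by (auto simp: S_def)
  have posS: "\<forall>z. z \<noteq> 0 \<longrightarrow> z \<bullet> (S *v z) > 0"
  proof (intro allI impI)
    fix z :: "real^('e + 'b + 'm)" assume z: "z \<noteq> 0"
    define w where "w = S *v z"
    have zw: "z = P *v w" by (simp add: w_def matrix_vector_mul_assoc PS)
    hence "w \<noteq> 0" using z by auto
    hence "w \<bullet> (P *v w) > 0" using posP by blast
    thus "z \<bullet> (S *v z) > 0" by (simp add: zw[symmetric] w_def[symmetric] inner_commute)
  qed
  have Sbb_eq: "blk_bb S = (\<chi> i j. S $ (Inr \<circ> Inl) i $ (Inr \<circ> Inl) j)"
    by (simp add: blk_bb_def)
  have injS: "\<forall>x. blk_bb S *v x = 0 \<longrightarrow> x = 0"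
    using principal_inj[OF posS, of "Inr \<circ> Inl"] Sbb_eq by (auto simp: inj_def)
  thus "\<forall>x. blk_bb (matrix_inv P) *v x = 0 \<longrightarrow> x = 0" by (simp add: S_def)
  define Pee where "Pee = (\<chi> i j. P $ Inl i $ Inl j)"
  define Pmm where "Pmm = (\<chi> i j. P $ (Inr \<circ> Inr) i $ (Inr \<circ> Inr) j)"
  have injPee: "\<forall>x. Pee *v x = 0 \<longrightarrow> x = 0"
    using principal_inj[OF posP, of Inl] unfolding Pee_def by (auto simp: inj_def)
  have injPmm: "\<forall>x. Pmm *v x = 0 \<longrightarrow> x = 0"
    using principal_inj[OF posP, of "Inr \<circ> Inr"] unfolding Pmm_def by (auto simp: inj_def)
  have em0: "P $ Inl i $ Inr (Inr l) = 0" for i l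
    using blanket_em by (simp add: blk_em_def vec_eq_iff)
  have me0: "P $ Inr (Inr i) $ Inl l = 0" for i l
    using blanket_me by (simp add: blk_me_def vec_eq_iff)
  have M1: "Pee ** blk_eb S + blk_eb P ** blk_bb S = 0"
  proof -
    have "(P ** S) $ Inl i $ Inr (Inl j) = 0" for i j by (simp add: PS mat_def)
    thus ?thesis
      by (simp add: vec_eq_iff matrix_matrix_mult_def sum_UNIV_plus[where f="\<lambda>k. P $ Inl _ $ k * S $ k $ _"]
          sum_UNIV_plus[where f="\<lambda>k. P $ Inl _ $ Inr k * S $ Inr k $ _"]
          Pee_def blk_eb_def blk_bb_def em0)
  qed
  have M2: "Pmm ** blk_mb S + blk_mb P ** blk_bb S = 0"
  proof -
    have "(P ** S) $ Inr (Inr i) $ Inr (Inl j) = 0" for i j by (simp add: PS mat_def)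
    thus ?thesis
      by (simp add: vec_eq_iff matrix_matrix_mult_def sum_UNIV_plus[where f="\<lambda>k. P $ Inr (Inr _) $ k * S $ k $ _"]
          sum_UNIV_plus[where f="\<lambda>k. P $ Inr (Inr _) $ Inr k * S $ Inr k $ _"]
          Pmm_def blk_mb_def blk_bb_def me0 add.commute)
  qed
  have V1: "Pee *v (blk_eb S *v x) = - (blk_eb P *v (blk_bb S *v x))" for x
    using arg_cong[OF M1, of "\<lambda>M. M *v x"]
    by (simp add: matrix_vector_mul_assoc matrix_vector_mult_add_rdistrib eq_neg_iff_add_eq_0)
  have V2: "Pmm *v (blk_mb S *v x) = - (blk_mb P *v (blk_bb S *v x))" for x
    using arg_cong[OF M2, of "\<lambda>M. M *v x"]
    by (simp add: matrix_vector_mul_assoc matrix_vector_mult_add_rdistrib eq_neg_iff_add_eq_0)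
  have E1: "blk_eb S *v x = 0 \<longleftrightarrow> blk_eb P *v (blk_bb S *v x) = 0" for x
    using V1[of x] injPee by (metis matrix_vector_mult_0_right neg_equal_0_iff_equal)
  have E2: "blk_mb S *v x = 0 \<longleftrightarrow> blk_mb P *v (blk_bb S *v x) = 0" for x
    using V2[of x] injPmm by (metis matrix_vector_mult_0_right neg_equal_0_iff_equal)
  have sur: "\<exists>x. y = blk_bb S *v x" for y
    using inj_mat_inv[OF injS] by (metis matrix_vector_mul_assoc matrix_vector_mul_lid)
  show "(\<forall>x. blk_mb (matrix_inv P) *v x = 0 \<longrightarrow> blk_eb (matrix_inv P) *v x = 0)
     \<longleftrightarrow> (\<forall>x. blk_mb P *v x = 0 \<longrightarrow> blk_eb P *v x = 0)"
    unfolding S_def[symmetric] E1 E2 using sur by metis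
qed

theorem lemma2p1:
  fixes P :: "real^('e::finite + 'b::finite + 'm::finite)^('e + 'b + 'm)"
  assumes spd: "sym_pos_def_mat P"
    and blanket_em: "blk_em P = 0"
    and blanket_me: "blk_me P = 0"
  shows "((\<exists>\<sigma> :: real^'m \<Rightarrow> real^'e.
              \<sigma> ` range (mu_map P) \<subseteq> range (eta_map P) \<and>
              (\<forall>b. \<sigma> (mu_map P b) = eta_map P b))
          \<longleftrightarrow> (\<forall>b1 b2. mu_map P b1 = mu_map P b2 \<longrightarrow> eta_map P b1 = eta_map P b2))
       \<and> ((\<forall>b1 b2. mu_map P b1 = mu_map P b2 \<longrightarrow> eta_map P b1 = eta_map P b2)
          \<longleftrightarrow> {x. blk_mb (matrix_inv P) *v x = 0} \<subseteq> {x. blk_eb (matrix_inv P) *v x = 0})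
       \<and> ({x. blk_mb (matrix_inv P) *v x = 0} \<subseteq> {x. blk_eb (matrix_inv P) *v x = 0}
          \<longleftrightarrow> {x. blk_mb P *v x = 0} \<subseteq> {x. blk_eb P *v x = 0})"
proof -
  define S where "S = matrix_inv P"
  define T where "T = matrix_inv (blk_bb S)"
  have TT: "blk_bb S ** T = mat 1 \<and> T ** blk_bb S = mat 1"
    using inj_mat_inv main(2)[OF assms] by (simp add: T_def S_def)
  have mu: "mu_map P b = blk_mb S *v (T *v b)" for b
    by (simp add: mu_map_def matrix_vector_mul_assoc S_def T_def)
  have eta: "eta_map P b = blk_eb S *v (T *v b)" for b
    by (simp add: eta_map_def matrix_vector_mul_assoc S_def T_def)
  have A: "(\<exists>\<sigma> :: real^'m \<Rightarrow> real^'e.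
              \<sigma> ` range (mu_map P) \<subseteq> range (eta_map P) \<and>
              (\<forall>b. \<sigma> (mu_map P b) = eta_map P b))
          \<longleftrightarrow> (\<forall>b1 b2. mu_map P b1 = mu_map P b2 \<longrightarrow> eta_map P b1 = eta_map P b2)"
  proof
    assume "\<exists>\<sigma> :: real^'m \<Rightarrow> real^'e.
              \<sigma> ` range (mu_map P) \<subseteq> range (eta_map P) \<and>
              (\<forall>b. \<sigma> (mu_map P b) = eta_map P b)"
    thus "\<forall>b1 b2. mu_map P b1 = mu_map P b2 \<longrightarrow> eta_map P b1 = eta_map P b2" by metis
  next
    assume H: "\<forall>b1 b2. mu_map P b1 = mu_map P b2 \<longrightarrow> eta_map P b1 = eta_map P b2"
    define \<sigma> where "\<sigma> y = eta_map P (SOME b. mu_map P b = y)" for y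
    have "\<sigma> (mu_map P b) = eta_map P b" for b
      unfolding \<sigma>_def by (rule H[rule_format], rule someI_ex, blast)
    moreover have "\<sigma> ` range (mu_map P) \<subseteq> range (eta_map P)" by (auto simp: \<sigma>_def)
    ultimately show "\<exists>\<sigma> :: real^'m \<Rightarrow> real^'e.
              \<sigma> ` range (mu_map P) \<subseteq> range (eta_map P) \<and>
              (\<forall>b. \<sigma> (mu_map P b) = eta_map P b)" by blast
  qed
  have B: "(\<forall>b1 b2. mu_map P b1 = mu_map P b2 \<longrightarrow> eta_map P b1 = eta_map P b2)
          \<longleftrightarrow> {x. blk_mb (matrix_inv P) *v x = 0} \<subseteq> {x. blk_eb (matrix_inv P) *v x = 0}"
  proof
    assume H: "\<forall>b1 b2. mu_map P b1 = mu_map P b2 \<longrightarrow> eta_map P b1 = eta_map P b2"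
    show "{x. blk_mb (matrix_inv P) *v x = 0} \<subseteq> {x. blk_eb (matrix_inv P) *v x = 0}"
    proof
      fix x assume "x \<in> {x. blk_mb (matrix_inv P) *v x = 0}"
      hence x0: "blk_mb S *v x = 0" by (simp add: S_def)
      have Tx: "T *v (blk_bb S *v x) = x" using TT by (simp add: matrix_vector_mul_assoc)
      have "mu_map P (blk_bb S *v x) = mu_map P 0" by (simp add: mu Tx x0)
      hence "eta_map P (blk_bb S *v x) = eta_map P 0" using H by blast
      hence "blk_eb S *v x = 0" by (simp add: eta Tx)
      thus "x \<in> {x. blk_eb (matrix_inv P) *v x = 0}" by (simp add: S_def)
    qed
  next
    assume H: "{x. blk_mb (matrix_inv P) *v x = 0} \<subseteq> {x. blk_eb (matrix_inv P) *v x = 0}"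
    show "\<forall>b1 b2. mu_map P b1 = mu_map P b2 \<longrightarrow> eta_map P b1 = eta_map P b2"
    proof (intro allI impI)
      fix b1 b2 assume "mu_map P b1 = mu_map P b2"
      hence "blk_mb S *v (T *v (b1 - b2)) = 0"
        by (simp add: mu matrix_vector_mult_diff_distrib)
      hence "blk_eb S *v (T *v (b1 - b2)) = 0" using H by (auto simp: S_def)
      thus "eta_map P b1 = eta_map P b2"
        by (simp add: eta matrix_vector_mult_diff_distrib)
    qed
  qed
  have C: "{x. blk_mb (matrix_inv P) *v x = 0} \<subseteq> {x. blk_eb (matrix_inv P) *v x = 0}
          \<longleftrightarrow> {x. blk_mb P *v x = 0} \<subseteq> {x. blk_eb P *v x = 0}"
    using main(1)[OF assms] by blast
  show ?thesis using A B C by blast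
qed

end
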